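(* Let $n\ge 2$ be an integer. Then $\gamma^{SLD}(P_n\square P_2)=n+1$ if $n$ is odd and $\gamma^{SLD}(P_n\square P_2)=n+2$ if $n$ is even.
   Context: $P_k$ denotes the path on $k$ vertices. The Cartesian product $G\square H$ has vertex set $V(G)\times V(H)$, with $(u,v)$ adjacent to $(u',v')$ iff either $u=u'$ and $vv'\in E(H)$, or $uu'\in E(G)$ and $v=v'$. For a vertex $u$, $N[u]$ is its closed neighbourhood. A code is a non-empty subset $C$ of the vertex set $V$; $I(C;u)=N[u]\cap C$. A code $C$ is self-locating-dominating if for every $u\in V\setminus C$ we have $I(C;u)\neq\emptyset$ and $\bigcap_{c\in I(C;u)}N[c]=\{u\}$; $\gamma^{SLD}$ is the minimum size of such a code. *)

theory Defs
  imports Main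
begin

text \<open>A (simple, undirected) graph is given by a vertex set V and an adjacency
relation E (assumed symmetric and irreflexive on V for the graphs considered).\<close>

definition closed_nbhd :: "'a set \<Rightarrow> ('a \<Rightarrow> 'a \<Rightarrow> bool) \<Rightarrow> 'a \<Rightarrow> 'a set" where
  "closed_nbhd V E u = {v \<in> V. v = u \<or> E u v}"

definition I_set :: "'a set \<Rightarrow> ('a \<Rightarrow> 'a \<Rightarrow> bool) \<Rightarrow> 'a set \<Rightarrow> 'a \<Rightarrow> 'a set" where
  "I_set V E C u = closed_nbhd V E u \<inter> C"

definition self_locating_dominating ::
  "'a set \<Rightarrow> ('a \<Rightarrow> 'a \<Rightarrow> bool) \<Rightarrow> 'a set \<Rightarrow> bool" where
  "self_locating_dominating V E C \<longleftrightarrow>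
     C \<subseteq> V \<and> C \<noteq> {} \<and>
     (\<forall>u \<in> V - C. I_set V E C u \<noteq> {} \<and>
        (\<Inter>c \<in> I_set V E C u. closed_nbhd V E c) = {u})"

definition gamma_SLD :: "'a set \<Rightarrow> ('a \<Rightarrow> 'a \<Rightarrow> bool) \<Rightarrow> nat" where
  "gamma_SLD V E = (LEAST k. \<exists>C. self_locating_dominating V E C \<and> finite C \<and> card C = k)"

definition path_V :: "nat \<Rightarrow> nat set" where "path_V k = {0..<k}"
definition path_E :: "nat \<Rightarrow> nat \<Rightarrow> bool" where "path_E i j \<longleftrightarrow> i + 1 = j \<or> j + 1 = i"

definition cart_V :: "'a set \<Rightarrow> 'b set \<Rightarrow> ('a \<times> 'b) set" where
  "cart_V V1 V2 = V1 \<times> V2"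
definition cart_E :: "('a \<Rightarrow> 'a \<Rightarrow> bool) \<Rightarrow> ('b \<Rightarrow> 'b \<Rightarrow> bool) \<Rightarrow> 'a \<times> 'b \<Rightarrow> 'a \<times> 'b \<Rightarrow> bool" where
  "cart_E E1 E2 p q \<longleftrightarrow>
     (fst p = fst q \<and> E2 (snd p) (snd q)) \<or> (E1 (fst p) (fst q) \<and> snd p = snd q)"

end

theory Submission
  imports Defs
begin

abbreviation "LV n \<equiv> cart_V (path_V n) (path_V 2)"
abbreviation "LE \<equiv> cart_E path_E path_E"

lemma mem_LV: "(p \<in> LV n) \<longleftrightarrow> fst p < n \<and> snd p < 2"
  by (cases p) (auto simp: cart_V_def path_V_def)

lemma right_cond:
  assumes S: "self_locating_dominating (LV n) LE C"
    and u: "i < n" "j < 2" "(i,j) \<notin> C"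
  shows "i+1 < n \<and> (i+1,j) \<in> C"
proof (rule ccontr)
  assume nr: "\<not> (i+1 < n \<and> (i+1,j) \<in> C)"
  have uV: "(i,j) \<in> LV n" using u by (simp add: mem_LV)
  have eq: "(\<Inter>c \<in> I_set (LV n) LE C (i,j). closed_nbhd (LV n) LE c) = {(i,j)}"
   and ne: "I_set (LV n) LE C (i,j) \<noteq> {}"
    using S uV u unfolding self_locating_dominating_def by auto
  have cI: "c = (i, 1-j) \<or> (0 < i \<and> c = (i-1,j) \<and> (i-1,j) \<in> C)"
    if "c \<in> I_set (LV n) LE C (i,j)" for c
  proof -
    obtain a b where c: "c = (a,b)" by (cases c)
    have "c \<in> C" "a < n" "b < 2" "c = (i,j) \<or> LE (i,j) c"
      using that c by (auto simp: I_set_def closed_nbhd_def mem_LV)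
    then show ?thesis using u nr c by (auto simp: cart_E_def path_E_def)
  qed
  show False
  proof (cases "0 < i \<and> (i-1,j) \<in> C")
    case True
    let ?w = "(i-1, 1-j)"
    have "?w \<in> (\<Inter>c \<in> I_set (LV n) LE C (i,j). closed_nbhd (LV n) LE c)"
    proof
      fix c assume "c \<in> I_set (LV n) LE C (i,j)"
      then have "c = (i, 1-j) \<or> c = (i-1,j)" using cI by blast
      then show "?w \<in> closed_nbhd (LV n) LE c"
        using True u by (auto simp: closed_nbhd_def mem_LV cart_E_def path_E_def)
    qed
    then show False using eq True by auto
  next
    case False
    let ?w = "(i, 1-j)"
    have "?w \<in> (\<Inter>c \<in> I_set (LV n) LE C (i,j). closed_nbhd (LV n) LE c)"
    proof
      fix c assume "c \<in> I_set (LV n) LE C (i,j)"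
      then have "c = (i, 1-j)" using cI False by blast
      then show "?w \<in> closed_nbhd (LV n) LE c"
        using u by (auto simp: closed_nbhd_def mem_LV)
    qed
    moreover have "1 - j \<noteq> j" using u by arith
    ultimately show False using eq u by auto
  qed
qed

lemma left_cond:
  assumes S: "self_locating_dominating (LV n) LE C"
    and u: "i < n" "j < 2" "(i,j) \<notin> C"
  shows "0 < i \<and> (i-1,j) \<in> C"
proof (rule ccontr)
  assume nr: "\<not> (0 < i \<and> (i-1,j) \<in> C)"
  have uV: "(i,j) \<in> LV n" using u by (simp add: mem_LV)
  have eq: "(\<Inter>c \<in> I_set (LV n) LE C (i,j). closed_nbhd (LV n) LE c) = {(i,j)}"
   and ne: "I_set (LV n) LE C (i,j) \<noteq> {}"
    using S uV u unfolding self_locating_dominating_def by auto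
  have cI: "c = (i, 1-j) \<or> (i+1 < n \<and> c = (i+1,j) \<and> (i+1,j) \<in> C)"
    if "c \<in> I_set (LV n) LE C (i,j)" for c
  proof -
    obtain a b where c: "c = (a,b)" by (cases c)
    have "c \<in> C" "a < n" "b < 2" "c = (i,j) \<or> LE (i,j) c"
      using that c by (auto simp: I_set_def closed_nbhd_def mem_LV)
    then show ?thesis using u nr c by (auto simp: cart_E_def path_E_def)
  qed
  show False
  proof (cases "i+1 < n \<and> (i+1,j) \<in> C")
    case True
    let ?w = "(i+1, 1-j)"
    have "?w \<in> (\<Inter>c \<in> I_set (LV n) LE C (i,j). closed_nbhd (LV n) LE c)"
    proof
      fix c assume "c \<in> I_set (LV n) LE C (i,j)"
      then have "c = (i, 1-j) \<or> c = (i+1,j)" using cI by blast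
      then show "?w \<in> closed_nbhd (LV n) LE c"
        using True u by (auto simp: closed_nbhd_def mem_LV cart_E_def path_E_def)
    qed
    then show False using eq True by auto
  next
    case False
    let ?w = "(i, 1-j)"
    have "?w \<in> (\<Inter>c \<in> I_set (LV n) LE C (i,j). closed_nbhd (LV n) LE c)"
    proof
      fix c assume "c \<in> I_set (LV n) LE C (i,j)"
      then have "c = (i, 1-j)" using cI False by blast
      then show "?w \<in> closed_nbhd (LV n) LE c"
        using u by (auto simp: closed_nbhd_def mem_LV)
    qed
    moreover have "1 - j \<noteq> j" using u by arith
    ultimately show False using eq u by auto
  qed
qed

lemma row_bound:
  assumes S: "S \<subseteq> {0..<n}" and n: "n \<ge> 1"
    and cond: "\<And>i. i < n \<Longrightarrow> i \<notin> S \<Longrightarrow> 0 < i \<and> i+1 < n \<and> i+1 \<in> S"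
  shows "n + 1 \<le> 2 * card S"
proof -
  let ?T = "{0..<n} - S"
  have fS: "finite S" using S finite_subset by blast
  have "0 \<in> S" using cond n by fastforce
  have "Suc ` ?T \<subseteq> S - {0}" using cond by auto
  then have "card (Suc ` ?T) \<le> card (S - {0})" using fS by (intro card_mono) auto
  then have "card ?T \<le> card S - 1" using \<open>0 \<in> S\<close> fS by (simp add: card_image)
  moreover have "card ?T + card S = n" using S fS
    by (metis card_Diff_subset card_atLeastLessThan card_mono diff_zero finite_atLeastLessThan le_add_diff_inverse2)
  moreover have "card S \<ge> 1" using \<open>0 \<in> S\<close> fS by (metis One_nat_def Suc_leI card_gt_0_iff empty_iff)
  ultimately show ?thesis by linarith
qed

lemma card_evens: "card {i. i < n \<and> even i} = (n+1) div 2"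
proof (induction n)
  case 0 then show ?case by simp
next
  case (Suc n)
  have "{i. i < Suc n \<and> even i} = {i. i < n \<and> even i} \<union> (if even n then {n} else {})"
    by (auto simp: less_Suc_eq)
  then show ?case using Suc by (auto simp: card_insert_if)
qed

lemma lower:
  assumes n: "n \<ge> 2" and S: "self_locating_dominating (LV n) LE C" and f: "finite C"
  shows "(if odd n then n + 1 else n + 2) \<le> card C"
proof -
  have CV: "C \<subseteq> LV n" using S by (simp add: self_locating_dominating_def)
  define S0 where "S0 = {i. (i,0::nat) \<in> C}"
  define S1 where "S1 = {i. (i,1::nat) \<in> C}"
  have Ceq: "C = (\<lambda>i. (i,0)) ` S0 \<union> (\<lambda>i. (i,1)) ` S1"
  proof
    show "C \<subseteq> (\<lambda>i. (i,0)) ` S0 \<union> (\<lambda>i. (i,1)) ` S1"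
    proof
      fix p assume p: "p \<in> C"
      obtain a b where ab: "p = (a,b)" by (cases p)
      have "b < 2" using p CV ab by (auto simp: mem_LV)
      then have "b = 0 \<or> b = 1" by arith
      then show "p \<in> (\<lambda>i. (i,0)) ` S0 \<union> (\<lambda>i. (i,1)) ` S1"
        using p ab S0_def S1_def by auto
    qed
  qed (auto simp: S0_def S1_def)
  have fin0: "finite S0" "finite S1"
  proof -
    have "S0 \<subseteq> {0..<n}" "S1 \<subseteq> {0..<n}" using CV by (auto simp: S0_def S1_def mem_LV)
    then show "finite S0" "finite S1" using finite_subset by blast+
  qed
  have "card C = card ((\<lambda>i. (i,0::nat)) ` S0) + card ((\<lambda>i. (i,1::nat)) ` S1)"
    unfolding Ceq using fin0 by (intro card_Un_disjoint) auto
  also have "\<dots> = card S0 + card S1" by (simp add: card_image inj_on_def)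
  finally have cC: "card C = card S0 + card S1" .
  have b0: "n + 1 \<le> 2 * card S0"
  proof (rule row_bound)
    show "S0 \<subseteq> {0..<n}" using CV by (auto simp: S0_def mem_LV)
    fix i assume "i < n" "i \<notin> S0"
    then show "0 < i \<and> i+1 < n \<and> i+1 \<in> S0"
      using right_cond[OF S, of i 0] left_cond[OF S, of i 0] by (auto simp: S0_def)
  qed (use n in auto)
  have b1: "n + 1 \<le> 2 * card S1"
  proof (rule row_bound)
    show "S1 \<subseteq> {0..<n}" using CV by (auto simp: S1_def mem_LV)
    fix i assume "i < n" "i \<notin> S1"
    then show "0 < i \<and> i+1 < n \<and> i+1 \<in> S1"
      using right_cond[OF S, of i 1] left_cond[OF S, of i 1] by (auto simp: S1_def)
  qed (use n in auto)
  show ?thesis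
  proof (cases "odd n")
    case True then show ?thesis using b0 b1 cC by simp
  next
    case False
    then have "n + 2 \<le> 2 * card S0" "n + 2 \<le> 2 * card S1" using b0 b1 by presburger+
    then show ?thesis using cC False by simp
  qed
qed

lemma upper:
  assumes n: "n \<ge> 2"
  defines "C0 \<equiv> {p \<in> LV n. even (fst p) \<or> fst p = n - 1}"
  shows "self_locating_dominating (LV n) LE C0 \<and> finite C0 \<and> card C0 = (if odd n then n + 1 else n + 2)"
proof (intro conjI)
  define A where "A = {i. i < n \<and> (even i \<or> i = n - 1)}"
  have C0A: "C0 = A \<times> {0..<2}" by (auto simp: C0_def A_def mem_LV)
  have "A = {i. i < n \<and> even i} \<union> {n-1}" using n by (auto simp: A_def)
  then have "card A = (if odd n then (n+1) div 2 else (n+1) div 2 + 1)"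
    using n card_evens[of n] by (auto simp: card_insert_if)
  moreover have "card C0 = card A * 2" unfolding C0A card_cartesian_product by simp
  ultimately show "card C0 = (if odd n then n + 1 else n + 2)"
  proof (cases "odd n")
    case True
    then have "(n+1) div 2 * 2 = n + 1" by presburger
    then show ?thesis using True \<open>card C0 = card A * 2\<close> \<open>card A = _\<close> by simp
  next
    case False
    then have "((n+1) div 2 + 1) * 2 = n + 2" by presburger
    then show ?thesis using False \<open>card C0 = card A * 2\<close> \<open>card A = _\<close> by simp
  qed
  show "finite C0" unfolding C0A A_def by auto
  show "self_locating_dominating (LV n) LE C0"
    unfolding self_locating_dominating_def
  proof (intro conjI ballI)
    show "C0 \<subseteq> LV n" by (auto simp: C0_def)
    have "(0,0) \<in> C0" using n by (auto simp: C0_def mem_LV)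
    then show "C0 \<noteq> {}" by blast
    fix u assume u: "u \<in> LV n - C0"
    obtain i j where ij: "u = (i,j)" by (cases u)
    have i: "i < n" "j < 2" "odd i" "i \<noteq> n - 1" using u ij by (auto simp: C0_def mem_LV)
    then have i1: "0 < i" "i + 1 < n" "even (i+1)" "even (i-1)"
    proof -
      show "0 < i" using i by (cases i) auto
      show "i + 1 < n" using i by linarith
      show "even (i+1)" using i by simp
      show "even (i-1)" using i \<open>odd i\<close> by (cases i) auto
    qed
    have m1: "(i-1,j) \<in> I_set (LV n) LE C0 u" using i i1 ij
      by (auto simp: I_set_def closed_nbhd_def C0_def mem_LV cart_E_def path_E_def)
    have m2: "(i+1,j) \<in> I_set (LV n) LE C0 u" using i i1 ij
      by (auto simp: I_set_def closed_nbhd_def C0_def mem_LV cart_E_def path_E_def)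
    then show "I_set (LV n) LE C0 u \<noteq> {}" by auto
    show "(\<Inter>c \<in> I_set (LV n) LE C0 u. closed_nbhd (LV n) LE c) = {u}"
    proof
      show "(\<Inter>c \<in> I_set (LV n) LE C0 u. closed_nbhd (LV n) LE c) \<subseteq> {u}"
      proof
        fix w assume "w \<in> (\<Inter>c \<in> I_set (LV n) LE C0 u. closed_nbhd (LV n) LE c)"
        then have "w \<in> closed_nbhd (LV n) LE (i-1,j)" "w \<in> closed_nbhd (LV n) LE (i+1,j)"
          using m1 m2 by auto
        moreover obtain a b where w: "w = (a,b)" by (cases w)
        ultimately have h1: "(a = i-1 \<and> b = j) \<or> (a = i-1 \<and> (j+1 = b \<or> b+1 = j)) \<or> ((i-1+1 = a \<or> a+1 = i-1) \<and> b = j)"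
          and h2: "(a = i+1 \<and> b = j) \<or> (a = i+1 \<and> (j+1 = b \<or> b+1 = j)) \<or> ((i+1+1 = a \<or> a+1 = i+1) \<and> b = j)"
          by (auto simp: closed_nbhd_def cart_E_def path_E_def)
        from h1 h2 i1 have "a = i \<and> b = j" by linarith
        then show "w \<in> {u}" using w ij by simp
      qed
      show "{u} \<subseteq> (\<Inter>c \<in> I_set (LV n) LE C0 u. closed_nbhd (LV n) LE c)"
        using u by (auto simp: I_set_def closed_nbhd_def cart_E_def path_E_def)
    qed
  qed
qed

theorem mainTheorem17:
  fixes n :: nat
  assumes "n \<ge> 2"
  shows "gamma_SLD (cart_V (path_V n) (path_V 2)) (cart_E path_E path_E)
           = (if odd n then n + 1 else n + 2)"
  unfolding gamma_SLD_def
proof (rule Least_equality)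
  show "\<exists>C. self_locating_dominating (LV n) LE C \<and> finite C \<and> card C = (if odd n then n + 1 else n + 2)"
    using upper[OF assms] by blast
  fix y assume "\<exists>C. self_locating_dominating (LV n) LE C \<and> finite C \<and> card C = y"
  then show "(if odd n then n + 1 else n + 2) \<le> y" using lower[OF assms] by blast
qed

end
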